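(* Let $A$ be an $n\times n$ Hermitian matrix ($n\ge2$) with eigenvalues $\lambda_1\ge\dots\ge\lambda_n$ and corresponding orthonormal eigenvectors $v_1,\dots,v_n$. Let $u\in\mathbb C^n$ be a unit vector, and let $\mu_1\ge\dots\ge\mu_{n-1}$ be the eigenvalues of the compression $B=P_uAP_u|_{u^\perp}$, $P_u=I-uu^*$. Set $U_\ell(u):=\sum_{i=\ell}^n|\langle u,v_i\rangle|^2$ and $L_{r+1}(u):=\sum_{i=1}^{r+1}|\langle u,v_i\rangle|^2$. Then for all $1\le\ell\le r\le n-1$ with $U_\ell(u)\ne0$ and $L_{r+1}(u)\ne0$, $$\sum_{j=\ell}^r\lambda_{j+1}+\sum_{j=\ell}^r\frac{|\langle u,v_{j+1}\rangle|^2}{L_{r+1}(u)}(\lambda_\ell-\lambda_{j+1})\le\sum_{j=\ell}^r\mu_j\le\sum_{j=\ell}^r\lambda_j-\sum_{j=\ell}^r\frac{|\langle u,v_j\rangle|^2}{U_\ell(u)}(\lambda_j-\lambda_{r+1}).$$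
   Context: $B$ is the compression of $A$ onto the hyperplane $u^\perp$, i.e. the operator $x\mapsto P_uAx$ on $u^\perp$ (equivalently $U^*AU$ for $U$ with orthonormal columns spanning $u^\perp$). *)

theory Defs
  imports "Jordan_Normal_Form.Matrix" "Jordan_Normal_Form.Char_Poly"
begin

definition adj :: "complex mat \<Rightarrow> complex mat" where
  "adj M = mat (dim_col M) (dim_row M) (\<lambda>(i,j). cnj (M $$ (j,i)))"

definition hermitian_mat :: "complex mat \<Rightarrow> bool" where
  "hermitian_mat M \<longleftrightarrow> adj M = M"

end

theory Submission
  imports Defs "Jordan_Normal_Form.Schur_Decomposition"
begin

lemma adj_carrier[simp]: "M \<in> carrier_mat a b \<Longrightarrow> adj M \<in> carrier_mat b a"
  unfolding adj_def carrier_mat_def by auto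

lemma adj_dims[simp]: "dim_row (adj M) = dim_col M" "dim_col (adj M) = dim_row M"
  unfolding adj_def by auto

lemma adj_index[simp]: "i < dim_col M \<Longrightarrow> j < dim_row M \<Longrightarrow> adj M $$ (i,j) = cnj (M $$ (j,i))"
  unfolding adj_def by auto

lemma adj_adj[simp]: "adj (adj M) = M"
  by (rule eq_matI, auto)

lemma adj_mult: assumes "A \<in> carrier_mat a b" "B \<in> carrier_mat b c"
  shows "adj (A * B) = adj B * adj A"
  using assms by (intro eq_matI) (auto simp: scalar_prod_def cnj_sum mult.commute)

lemma adj_one[simp]: "adj (1\<^sub>m k) = 1\<^sub>m k"
  by (rule eq_matI, auto)

lemma inner_adj: assumes M: "M \<in> carrier_mat a b" and x: "x \<in> carrier_vec b" and y: "y \<in> carrier_vec a"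
  shows "(M *\<^sub>v x) \<bullet>c y = x \<bullet>c (adj M *\<^sub>v y)"
proof -
  have "(M *\<^sub>v x) \<bullet>c y = (\<Sum>i<a. (\<Sum>j<b. M $$ (i,j) * x $ j) * cnj (y $ i))"
    using M x y by (auto simp: scalar_prod_def mult_mat_vec_def lessThan_atLeast0)
  also have "\<dots> = (\<Sum>i<a. \<Sum>j<b. x $ j * (M $$ (i,j) * cnj (y $ i)))"
    by (simp add: sum_distrib_right sum_distrib_left mult_ac)
  also have "\<dots> = (\<Sum>j<b. \<Sum>i<a. x $ j * (M $$ (i,j) * cnj (y $ i)))"
    by (rule sum.swap)
  also have "\<dots> = x \<bullet>c (adj M *\<^sub>v y)"
    using M x y by (auto simp: scalar_prod_def mult_mat_vec_def lessThan_atLeast0 cnj_sum sum_distrib_left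
        intro!: sum.cong)
  finally show ?thesis .
qed

lemma cinner_comm: assumes "x \<in> carrier_vec n" "y \<in> carrier_vec n"
  shows "x \<bullet>c y = cnj (y \<bullet>c x)"
  using assms by (auto simp: scalar_prod_def cnj_sum mult.commute)

definition nsq :: "complex vec \<Rightarrow> real" where
  "nsq x = (\<Sum>k<dim_vec x. (cmod (x $ k))\<^sup>2)"

lemma cinner_self: "x \<bullet>c x = complex_of_real (nsq x)"
proof -
  have "x \<bullet>c x = (\<Sum>k<dim_vec x. x $ k * cnj (x $ k))"
    unfolding scalar_prod_def by (auto simp: lessThan_atLeast0)
  also have "\<dots> = (\<Sum>k<dim_vec x. complex_of_real ((cmod (x $ k))\<^sup>2))"
    by (rule sum.cong, simp, subst complex_norm_square, simp)
  finally show ?thesis unfolding nsq_def by simp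
qed

lemma nsq_ge0: "nsq x \<ge> 0" unfolding nsq_def by (auto intro: sum_nonneg)


lemma cinner_minus_expand: fixes x y :: "complex vec" assumes "x \<in> carrier_vec n" "y \<in> carrier_vec n"
  shows "(x - y) \<bullet>c (x - y) = x \<bullet>c x - x \<bullet>c y - y \<bullet>c x + y \<bullet>c y"
  using assms unfolding scalar_prod_def
  by (simp add: algebra_simps sum_subtractf sum.distrib conjugate_complex_def)

definition orthonormal :: "complex vec list \<Rightarrow> bool" where
  "orthonormal xs \<longleftrightarrow> (\<forall>i<length xs. \<forall>j<length xs. xs!i \<bullet>c xs!j = (if i = j then 1 else 0))"

lemma adj_cols_mult: assumes "set xs \<subseteq> carrier_vec n"
  shows "adj (mat_of_cols n xs) * mat_of_cols n xs = mat (length xs) (length xs) (\<lambda>(i,j). xs!j \<bullet>c xs!i)"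
proof (rule eq_matI)
  fix i j assume i: "i < dim_row (mat (length xs) (length xs) (\<lambda>(i,j). xs!j \<bullet>c xs!i))"
    and j: "j < dim_col (mat (length xs) (length xs) (\<lambda>(i,j). xs!j \<bullet>c xs!i))"
  have ci: "xs!i \<in> carrier_vec n" "xs!j \<in> carrier_vec n" using assms i j by auto
  show "(adj (mat_of_cols n xs) * mat_of_cols n xs) $$ (i, j) = mat (length xs) (length xs) (\<lambda>(i,j). xs!j \<bullet>c xs!i) $$ (i, j)"
    using i j ci by (auto simp: scalar_prod_def mat_of_cols_def mult.commute intro!: sum.cong)
qed auto

lemma orthonormal_adj: assumes "set xs \<subseteq> carrier_vec n" "orthonormal xs"
  shows "adj (mat_of_cols n xs) * mat_of_cols n xs = 1\<^sub>m (length xs)"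
  unfolding adj_cols_mult[OF assms(1)] using assms(2) unfolding orthonormal_def
  by (intro eq_matI) auto

lemma adj_cols_vec: assumes "set xs \<subseteq> carrier_vec n" "z \<in> carrier_vec n"
  shows "adj (mat_of_cols n xs) *\<^sub>v z = vec (length xs) (\<lambda>m. z \<bullet>c xs!m)"
proof (rule eq_vecI)
  fix m assume m: "m < dim_vec (vec (length xs) (\<lambda>m. z \<bullet>c xs!m))"
  have c: "xs!m \<in> carrier_vec n" using assms m by auto
  show "(adj (mat_of_cols n xs) *\<^sub>v z) $ m = vec (length xs) (\<lambda>m. z \<bullet>c xs!m) $ m"
    using m c assms(2) by (auto simp: scalar_prod_def mat_of_cols_def mult.commute intro!: sum.cong)
qed auto

lemma bessel: assumes xs: "set xs \<subseteq> carrier_vec n" and on: "orthonormal xs" and z: "z \<in> carrier_vec n"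
  shows "(\<Sum>m<length xs. (cmod (z \<bullet>c xs!m))\<^sup>2) \<le> nsq z"
proof -
  define X where "X = mat_of_cols n xs"
  define a where "a = adj X *\<^sub>v z"
  have X: "X \<in> carrier_mat n (length xs)" unfolding X_def by auto
  have a: "a \<in> carrier_vec (length xs)" unfolding a_def using mult_mat_vec_carrier[OF adj_carrier[OF X] z] .
  have XX: "adj X * X = 1\<^sub>m (length xs)" unfolding X_def by (rule orthonormal_adj[OF xs on])
  have aval: "a = vec (length xs) (\<lambda>m. z \<bullet>c xs!m)" unfolding a_def X_def by (rule adj_cols_vec[OF xs z])
  define p where "p = X *\<^sub>v a"
  have p: "p \<in> carrier_vec n" unfolding p_def using X a by auto
  have pz: "p \<bullet>c z = a \<bullet>c a" unfolding p_def using inner_adj[OF X a z] unfolding a_def .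
  have zp: "z \<bullet>c p = a \<bullet>c a" using cinner_comm[OF z p] pz by (simp add: cinner_self)
  have pp: "p \<bullet>c p = a \<bullet>c a"
  proof -
    have "p \<bullet>c p = a \<bullet>c (adj X *\<^sub>v (X *\<^sub>v a))" unfolding p_def
      by (rule inner_adj[OF X a], insert X a, auto)
    also have "adj X *\<^sub>v (X *\<^sub>v a) = a"
      using assoc_mult_mat_vec[OF adj_carrier[OF X] X a] XX a by simp
    finally show ?thesis .
  qed
  have "(z - p) \<bullet>c (z - p) = z \<bullet>c z - a \<bullet>c a"
    by (simp add: cinner_minus_expand[OF z p] zp pz pp)
  hence "complex_of_real (nsq (z - p)) = complex_of_real (nsq z - nsq a)" by (simp add: cinner_self)
  hence "nsq z - nsq a \<ge> 0" using nsq_ge0[of "z - p"] by (simp only: of_real_eq_iff)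
  moreover have "nsq a = (\<Sum>m<length xs. (cmod (z \<bullet>c xs!m))\<^sup>2)" unfolding nsq_def aval by simp
  ultimately show ?thesis by simp
qed

lemma exists_orth_vec: fixes cs :: "complex vec list" assumes cs: "set cs \<subseteq> carrier_vec q" and len: "length cs < q"
  shows "\<exists>a \<in> carrier_vec q. a \<bullet>c a = 1 \<and> (\<forall>c\<in>set cs. a \<bullet>c c = 0)"
proof -
  define f where "f = (\<lambda>i. if i < length cs then conjugate (cs!i) else 0\<^sub>v q)"
  define M where "M = mat\<^sub>r q q (\<lambda>i. if i = q - 1 then 0\<^sub>v q else f i)"
  have fc: "f \<in> {0..<q} \<rightarrow> carrier_vec q" unfolding f_def using cs nth_mem by (fastforce intro!: carrier_vec_conjugate)
  have "det M = 0" unfolding M_def by (rule det_row_0[OF _ fc], insert len, auto)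
  moreover have Mc: "M \<in> carrier_mat q q" unfolding M_def by simp
  ultimately have "\<exists>b. b \<in> carrier_vec q \<and> b \<noteq> 0\<^sub>v q \<and> M *\<^sub>v b = 0\<^sub>v q"
    using det_0_iff_vec_prod_zero[OF Mc] by simp
  then
  obtain b where b: "b \<in> carrier_vec q" "b \<noteq> 0\<^sub>v q" "M *\<^sub>v b = 0\<^sub>v q" by auto
  have bb: "b \<bullet>c b \<noteq> 0" using b by simp
  have orth: "b \<bullet>c c = 0" if c: "c \<in> set cs" for c
  proof -
    from c obtain i where i: "i < length cs" "c = cs!i" by (auto simp: in_set_conv_nth)
    have iq: "i < q" "i \<noteq> q - 1" using i len by auto
    have cc: "c \<in> carrier_vec q" using c cs by auto
    have "(M *\<^sub>v b) $ i = 0" using b(3) iq by simp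
    hence "row M i \<bullet> b = 0" using iq unfolding M_def by simp
    moreover have "row M i = conjugate c" unfolding M_def using iq i cc by (simp add: f_def)
    ultimately have "conjugate c \<bullet> b = 0" by simp
    thus ?thesis using comm_scalar_prod[of b q "conjugate c"] b cc by simp
  qed
  define s where "s = nsq b"
  have s: "s > 0" using bb nsq_ge0[of b] unfolding s_def by (auto simp: cinner_self)
  define a where "a = complex_of_real (1 / sqrt s) \<cdot>\<^sub>v b"
  have ac: "a \<in> carrier_vec q" unfolding a_def using b by simp
  have "a \<bullet>c a = complex_of_real (1 / sqrt s) * cnj (complex_of_real (1 / sqrt s)) * (b \<bullet>c b)"
    unfolding a_def using b(1) by (simp add: conjugate_smult_vec)
  also have "\<dots> = 1"
  proof -
    have "(1 / sqrt s)^2 * s = 1" using s by (simp add: power_divide)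
    hence "complex_of_real ((1 / sqrt s)^2 * s) = 1" by simp
    thus ?thesis by (simp add: cinner_self s_def[symmetric] power2_eq_square flip: of_real_mult)
  qed
  finally have aa: "a \<bullet>c a = 1" .
  have "a \<bullet>c c = 0" if "c \<in> set cs" for c
    unfolding a_def using orth[OF that] b(1) cs that by auto
  with ac aa show ?thesis by blast
qed


lemma orthonormal_snoc: assumes as: "set as \<subseteq> carrier_vec q" "orthonormal as" and a: "a \<in> carrier_vec q" "a \<bullet>c a = 1"
  and orth: "\<forall>b\<in>set as. a \<bullet>c b = 0"
  shows "orthonormal (as @ [a])"
  unfolding orthonormal_def
proof (intro allI impI)
  fix i j assume i: "i < length (as @ [a])" and j: "j < length (as @ [a])"
  have o2: "b \<bullet>c a = 0" if "b \<in> set as" for b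
    using cinner_comm[of b q a] that as a orth by auto
  show "(as @ [a]) ! i \<bullet>c (as @ [a]) ! j = (if i = j then 1 else 0)"
  proof (cases "i < length as")
    case True note i' = this
    show ?thesis
    proof (cases "j < length as")
      case True thus ?thesis using i' as(2) unfolding orthonormal_def by (simp add: nth_append)
    next
      case False hence "j = length as" using j by simp
      thus ?thesis using i' o2[of "as!i"] by (simp add: nth_append)
    qed
  next
    case False hence i': "i = length as" using i by simp
    show ?thesis
    proof (cases "j < length as")
      case True thus ?thesis using i' orth by (simp add: nth_append)
    next
      case False hence "j = length as" using j by simp
      thus ?thesis using i' a by (simp add: nth_append)
    qed
  qed
qed

lemma frames: fixes cs :: "complex vec list"
  assumes cs: "set cs \<subseteq> carrier_vec q" and len: "length cs + k \<le> q"
  shows "\<exists>as. length as = k \<and> set as \<subseteq> carrier_vec q \<and> orthonormal as \<and> (\<forall>a\<in>set as. \<forall>c\<in>set cs. a \<bullet>c c = 0)"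
  using len
proof (induction k)
  case 0
  show ?case by (rule exI[of _ "[]"], auto simp: orthonormal_def)
next
  case (Suc k)
  then obtain as where as: "length as = k" "set as \<subseteq> carrier_vec q" "orthonormal as"
    "\<forall>a\<in>set as. \<forall>c\<in>set cs. a \<bullet>c c = 0" by auto
  have "set (cs @ as) \<subseteq> carrier_vec q" "length (cs @ as) < q" using cs as Suc.prems by auto
  from exists_orth_vec[OF this] obtain a where a: "a \<in> carrier_vec q" "a \<bullet>c a = 1"
    "\<forall>c\<in>set (cs @ as). a \<bullet>c c = 0" by blast
  show ?case
    by (rule exI[of _ "as @ [a]"], insert as a orthonormal_snoc[OF as(2,3) a(1,2)], auto)
qed

definition dmat :: "nat \<Rightarrow> (nat \<Rightarrow> complex) \<Rightarrow> complex mat" where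
  "dmat m d = mat m m (\<lambda>(i,j). if i = j then d i else 0)"

lemma dmat_carrier[simp]: "dmat m d \<in> carrier_mat m m" unfolding dmat_def by simp
lemma dmat_dims[simp]: "dim_row (dmat m d) = m" "dim_col (dmat m d) = m" unfolding dmat_def by simp_all

lemma orthonormal_cons: assumes as: "set as \<subseteq> carrier_vec q" "orthonormal as" and a: "a \<in> carrier_vec q" "a \<bullet>c a = 1"
  and orth: "\<forall>b\<in>set as. b \<bullet>c a = 0"
  shows "orthonormal (a # as)"
  unfolding orthonormal_def
proof (intro allI impI)
  fix i j assume i: "i < length (a # as)" and j: "j < length (a # as)"
  have o2: "a \<bullet>c b = 0" if "b \<in> set as" for b
    using cinner_comm[of a q b] that as a orth by auto
  show "(a # as) ! i \<bullet>c (a # as) ! j = (if i = j then 1 else 0)"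
  proof (cases i)
    case 0 note i' = this
    show ?thesis
    proof (cases j)
      case 0 thus ?thesis using i' a by simp
    next
      case (Suc j') thus ?thesis using i' o2[of "as!j'"] j by simp
    qed
  next
    case (Suc i') note ii = this
    show ?thesis
    proof (cases j)
      case 0 thus ?thesis using ii orth i by simp
    next
      case (Suc j') thus ?thesis using ii as(2) i j unfolding orthonormal_def by simp
    qed
  qed
qed

lemma char_poly_1x1: "char_poly (mat 1 1 (\<lambda>_. e)) = [:-e, 1:]"
  by (simp add: char_poly_defs det_def sign_def)

lemma spectral:
  fixes B :: "complex mat" and es :: "complex list"
  assumes "B \<in> carrier_mat m m" "adj B = B" "char_poly B = (\<Prod>e \<leftarrow> es. [:- e, 1:])"
  shows "\<exists>Z \<in> carrier_mat m m. adj Z * Z = 1\<^sub>m m \<and> B * Z = Z * dmat m (\<lambda>i. es ! i)"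
  using assms
proof (induction es arbitrary: m B)
  case Nil
  from degree_monic_char_poly[OF Nil(1)] Nil(3) have m0: "m = 0" by simp
  show ?case
    by (rule bexI[of _ "1\<^sub>m m"], insert Nil(1) m0, auto intro!: eq_matI simp: dmat_def)
next
  case (Cons e es m B)
  note Bc = Cons.prems(1) and Bh = Cons.prems(2) and cp = Cons.prems(3)
  have cp': "char_poly B = [:-e, 1:] * (\<Prod>e \<leftarrow> es. [:- e, 1:])" using cp by simp
  have mon: "monic (\<Prod>e\<leftarrow> es. [:- e, 1:])" by (rule monic_prod_list, auto)
  have deg: "degree (char_poly B) = Suc (degree (\<Prod>e\<leftarrow> es. [:- e, 1:]))" unfolding cp'
    by (subst degree_mult_eq, insert mon, auto)
  with degree_monic_char_poly[OF Bc] obtain m' where m: "m = Suc m'" by (cases m, auto)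
  have "poly (char_poly B) e = 0" unfolding cp' by simp
  hence "eigenvalue B e" using eigenvalue_root_char_poly[OF Bc] by simp
  then obtain v0 where v0: "eigenvector B v0 e" unfolding eigenvalue_def by auto
  hence v0c: "v0 \<in> carrier_vec m" and v0nz: "v0 \<noteq> 0\<^sub>v m" and Bv0: "B *\<^sub>v v0 = e \<cdot>\<^sub>v v0"
    using Bc unfolding eigenvector_def by auto
  define s where "s = nsq v0"
  have s: "s > 0" using v0nz v0c nsq_ge0[of v0] unfolding s_def
    by (metis cinner_self conjugate_square_eq_0_vec less_eq_real_def of_real_0)
  define v where "v = complex_of_real (1 / sqrt s) \<cdot>\<^sub>v v0"
  have vc: "v \<in> carrier_vec m" unfolding v_def using v0c by simp
  have "v \<bullet>c v = complex_of_real (1 / sqrt s) * cnj (complex_of_real (1 / sqrt s)) * (v0 \<bullet>c v0)"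
    unfolding v_def using v0c by (simp add: conjugate_smult_vec)
  also have "\<dots> = 1"
  proof -
    have "(1 / sqrt s)^2 * s = 1" using s by (simp add: power_divide)
    hence "complex_of_real ((1 / sqrt s)^2 * s) = 1" by simp
    thus ?thesis by (simp add: cinner_self s_def[symmetric] power2_eq_square flip: of_real_mult)
  qed
  finally have vv: "v \<bullet>c v = 1" .
  have Bv: "B *\<^sub>v v = e \<cdot>\<^sub>v v" unfolding v_def using Bv0 Bc v0c
    by (simp add: mult_mat_vec smult_smult_assoc mult.commute)
  from frames[of "[v]" m m'] vc m obtain as where as: "length as = m'" "set as \<subseteq> carrier_vec m"
    "orthonormal as" "\<forall>a\<in>set as. a \<bullet>c v = 0" by auto
  define ws where "ws = v # as"
  have ws: "set ws \<subseteq> carrier_vec m" "orthonormal ws" "length ws = m"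
    unfolding ws_def using orthonormal_cons[OF as(2,3) vc vv] as vc m by auto
  define W where "W = mat_of_cols m ws"
  have Wc: "W \<in> carrier_mat m m" unfolding W_def using ws by auto
  have WW: "adj W * W = 1\<^sub>m m" unfolding W_def using orthonormal_adj[OF ws(1,2)] ws(3) by simp
  have WW': "W * adj W = 1\<^sub>m m" using mat_mult_left_right_inverse[OF adj_carrier[OF Wc] Wc WW] .
  have colW0: "col W 0 = v" unfolding W_def using m vc by (simp add: ws_def)
  define B' where "B' = adj W * (B * W)"
  have B'c: "B' \<in> carrier_mat m m" unfolding B'_def using Wc Bc by auto
  have B'h: "adj B' = B'" unfolding B'_def
    using Wc Bc Bh by (simp add: adj_mult[of _ m m _ m] assoc_mult_mat[of _ m m _ m _ m])
  have B'col: "B' $$ (i, 0) = (if i = 0 then e else 0)" if i: "i < m" for i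
  proof -
    have "B' $$ (i, 0) = row (adj W) i \<bullet> col (B * W) 0" unfolding B'_def using i Wc Bc m by simp
    also have "col (B * W) 0 = e \<cdot>\<^sub>v v" using col_mult2[OF Bc Wc, of 0] m colW0 Bv by simp
    also have "row (adj W) i \<bullet> (e \<cdot>\<^sub>v v) = e * (row (adj W) i \<bullet> col W 0)"
      using colW0 vc Wc i by simp
    also have "row (adj W) i \<bullet> col W 0 = (adj W * W) $$ (i, 0)" using i Wc m by simp
    finally show ?thesis using WW i m by simp
  qed
  have B'row: "B' $$ (0, j) = (if j = 0 then e else 0)" if j: "j < m" for j
  proof -
    have "B' $$ (0, j) = adj B' $$ (0, j)" using B'h by simp
    also have "\<dots> = cnj (B' $$ (j, 0))" using B'c j m by simp
    finally show ?thesis using B'col[OF j] B'col[of 0] m by (cases "j = 0", auto)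
  qed
  define B3 where "B3 = mat m' m' (\<lambda>(i,j). B' $$ (Suc i, Suc j))"
  define E1 where "E1 = mat 1 1 (\<lambda>_. e)"
  have B3c: "B3 \<in> carrier_mat m' m'" unfolding B3_def by simp
  have E1c: "E1 \<in> carrier_mat 1 1" unfolding E1_def by simp
  have B3h: "adj B3 = B3"
  proof (rule eq_matI)
    fix i j assume "i < dim_row B3" "j < dim_col B3"
    hence ij: "i < m'" "j < m'" unfolding B3_def by auto
    have "adj B' $$ (Suc i, Suc j) = B' $$ (Suc i, Suc j)" using B'h by simp
    thus "adj B3 $$ (i, j) = B3 $$ (i, j)" using ij B'c m unfolding B3_def by simp
  qed (auto simp: B3_def)
  have B'block: "B' = four_block_mat E1 (0\<^sub>m 1 m') (0\<^sub>m m' 1) B3"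
  proof (rule eq_matI)
    fix i j assume "i < dim_row (four_block_mat E1 (0\<^sub>m 1 m') (0\<^sub>m m' 1) B3)"
      "j < dim_col (four_block_mat E1 (0\<^sub>m 1 m') (0\<^sub>m m' 1) B3)"
    hence ij: "i < m" "j < m" using m E1c B3c by auto
    show "B' $$ (i, j) = four_block_mat E1 (0\<^sub>m 1 m') (0\<^sub>m m' 1) B3 $$ (i, j)"
    proof (cases "i = 0 \<or> j = 0")
      case True thus ?thesis using ij B'col B'row m unfolding E1_def B3_def by auto
    next
      case False
      then obtain i' j' where "i = Suc i'" "j = Suc j'" by (cases i; cases j; auto)
      thus ?thesis using ij m unfolding E1_def B3_def by simp
    qed
  qed (insert B'c m E1c B3c, auto)
  have WB': "W * B' = B * W"
  proof -
    have "W * B' = (W * adj W) * (B * W)" unfolding B'_def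
      using Wc Bc by (simp add: assoc_mult_mat[of _ m m _ m _ m])
    also have "\<dots> = B * W" using WW' Bc Wc by simp
    finally show ?thesis .
  qed
  have WB'W: "W * B' * adj W = B"
  proof -
    have "W * B' * adj W = B * W * adj W" using WB' by simp
    also have "\<dots> = B * (W * adj W)" using Wc Bc by (simp add: assoc_mult_mat[of _ m m _ m _ m])
    finally show "W * B' * adj W = B" using WW' Bc by simp
  qed
  have sim: "similar_mat B B'"
    unfolding similar_mat_def similar_mat_wit_def Let_def
  proof (intro exI conjI)
    show "{B, B', W, adj W} \<subseteq> carrier_mat (dim_row B) (dim_row B)" using Bc B'c Wc by auto
    show "W * adj W = 1\<^sub>m (dim_row B)" using WW' Bc by simp
    show "adj W * W = 1\<^sub>m (dim_row B)" using WW Bc by simp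
    show "B = W * B' * adj W" using WB'W by simp
  qed
  have "char_poly B = char_poly B'" by (rule char_poly_similar[OF sim])
  also have "\<dots> = char_poly E1 * char_poly B3"
    unfolding B'block by (rule char_poly_four_block_zeros_col[OF E1c _ B3c], auto)
  also have "char_poly E1 = [:-e, 1:]" unfolding E1_def by (rule char_poly_1x1)
  finally have cp3: "char_poly B3 = (\<Prod>e \<leftarrow> es. [:- e, 1:])" using cp'
    by (metis mult_cancel_left pCons_eq_0_iff zero_neq_one)
  from Cons.IH[OF B3c B3h cp3] obtain Z3 where Z3: "Z3 \<in> carrier_mat m' m'" "adj Z3 * Z3 = 1\<^sub>m m'"
    "B3 * Z3 = Z3 * dmat m' (\<lambda>i. es ! i)" by auto
  define F where "F = four_block_mat (1\<^sub>m 1) (0\<^sub>m 1 m') (0\<^sub>m m' 1) Z3"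
  have Fc: "F \<in> carrier_mat m m" unfolding F_def using Z3(1) m by auto
  have adjF: "adj F = four_block_mat (1\<^sub>m 1) (0\<^sub>m 1 m') (0\<^sub>m m' 1) (adj Z3)"
    unfolding F_def using Z3(1) by (intro eq_matI) auto
  have FF: "adj F * F = 1\<^sub>m m" unfolding adjF unfolding F_def
    using Z3 m by (subst mult_four_block_mat[of _ 1 1 _ m' _ m' _ _ 1 _ m']) auto
  have D: "dmat m (\<lambda>i. (e # es) ! i) = four_block_mat E1 (0\<^sub>m 1 m') (0\<^sub>m m' 1) (dmat m' (\<lambda>i. es ! i))"
    unfolding dmat_def E1_def m by (intro eq_matI) auto
  have B'F: "B' * F = F * dmat m (\<lambda>i. (e # es) ! i)"
    unfolding B'block F_def D using Z3 E1c B3c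
    by (simp add: mult_four_block_mat[of _ 1 1 _ m' _ m' _ _ 1 _ m'])
  define Z where "Z = W * F"
  have Zc: "Z \<in> carrier_mat m m" unfolding Z_def using Wc Fc by auto
  have "adj Z * Z = adj F * (adj W * (W * F))" unfolding Z_def
    using Wc Fc by (simp add: adj_mult[of _ m m _ m] assoc_mult_mat[of _ m m _ m _ m])
  also have "adj W * (W * F) = (adj W * W) * F" using Wc Fc by (simp add: assoc_mult_mat[of _ m m _ m _ m])
  also have "\<dots> = F" using WW Fc by simp
  finally have "adj Z * Z = adj F * F" .
  also have "\<dots> = 1\<^sub>m m" using FF by simp
  finally have ZZ: "adj Z * Z = 1\<^sub>m m" .
  have BW: "B * W = W * B'" using WB' by simp
  have "B * Z = (B * W) * F" unfolding Z_def
    by (rule assoc_mult_mat[OF Bc Wc Fc, symmetric])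
  also have "\<dots> = (W * B') * F" using BW by simp
  also have "\<dots> = W * (B' * F)" by (rule assoc_mult_mat[OF Wc B'c Fc])
  also have "\<dots> = Z * dmat m (\<lambda>i. (e # es) ! i)" unfolding B'F Z_def using Wc Fc
    by (simp add: assoc_mult_mat[of _ m m _ m _ m])
  finally show ?case using Zc ZZ by blast
qed

lemma knap:
  fixes f q h :: "nat \<Rightarrow> real" and D T :: "nat set" and \<theta> :: real
  assumes D: "finite D" and TD: "T \<subseteq> D" and q0: "\<And>i. i \<in> D \<Longrightarrow> 0 \<le> q i"
    and qh: "\<And>i. i \<in> T \<Longrightarrow> q i \<le> h i" and qs: "(\<Sum>i\<in>D. q i) = real (card T)"
    and fT: "\<And>i. i \<in> T \<Longrightarrow> \<theta> \<le> f i" and fD: "\<And>i. i \<in> D - T \<Longrightarrow> f i \<le> \<theta>"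
  shows "(\<Sum>i\<in>D. f i * q i) \<le> \<theta> * real (card T) + (\<Sum>i\<in>T. (f i - \<theta>) * h i)"
proof -
  have T: "finite T" using D TD finite_subset by auto
  have "(\<Sum>i\<in>D. f i * q i) = (\<Sum>i\<in>D. \<theta> * q i) + (\<Sum>i\<in>D. (f i - \<theta>) * q i)"
    by (simp add: sum.distrib[symmetric] algebra_simps)
  also have "(\<Sum>i\<in>D. \<theta> * q i) = \<theta> * real (card T)" by (simp add: sum_distrib_left[symmetric] qs)
  also have "(\<Sum>i\<in>D. (f i - \<theta>) * q i) = (\<Sum>i\<in>T. (f i - \<theta>) * q i) + (\<Sum>i\<in>D - T. (f i - \<theta>) * q i)"
    using sum.subset_diff[OF TD D, of "\<lambda>i. (f i - \<theta>) * q i"] by simp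
  also have "(\<Sum>i\<in>T. (f i - \<theta>) * q i) \<le> (\<Sum>i\<in>T. (f i - \<theta>) * h i)"
    by (rule sum_mono, rule mult_left_mono, insert qh fT, auto)
  also have "(\<Sum>i\<in>D - T. (f i - \<theta>) * q i) \<le> 0"
    by (rule sum_nonpos, rule mult_nonpos_nonneg, insert fD q0, auto)
  finally show ?thesis by simp
qed

lemma adj_vec_index: assumes M: "M \<in> carrier_mat a b" and x: "x \<in> carrier_vec a" and i: "i < b"
  shows "(adj M *\<^sub>v x) $ i = x \<bullet>c col M i"
  using M x i by (auto simp: scalar_prod_def mult.commute intro!: sum.cong)

lemma inner_adj2: assumes M: "M \<in> carrier_mat a b" and x: "x \<in> carrier_vec a" and y: "y \<in> carrier_vec b"
  shows "x \<bullet>c (M *\<^sub>v y) = (adj M *\<^sub>v x) \<bullet>c y"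
  using inner_adj[OF adj_carrier[OF M] x y] by simp

lemma isometry_inner: assumes M: "M \<in> carrier_mat a b" and MM: "adj M * M = 1\<^sub>m b"
  and x: "x \<in> carrier_vec b" and y: "y \<in> carrier_vec b"
  shows "(M *\<^sub>v x) \<bullet>c (M *\<^sub>v y) = x \<bullet>c y"
proof -
  have "(M *\<^sub>v x) \<bullet>c (M *\<^sub>v y) = x \<bullet>c (adj M *\<^sub>v (M *\<^sub>v y))"
    by (rule inner_adj[OF M x], insert M y, auto)
  also have "adj M *\<^sub>v (M *\<^sub>v y) = y"
    using assoc_mult_mat_vec[OF adj_carrier[OF M] M y] MM y by simp
  finally show ?thesis .
qed

lemma quad_dmat: assumes a: "a \<in> carrier_vec m"
  shows "(dmat m d *\<^sub>v a) \<bullet>c a = (\<Sum>j<m. d j * complex_of_real ((cmod (a $ j))\<^sup>2))"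
proof -
  have "(dmat m d *\<^sub>v a) \<bullet>c a = (\<Sum>j<m. (d j * a $ j) * cnj (a $ j))"
  proof -
    have row: "row (dmat m d) j \<bullet> a = d j * a $ j" if j: "j < m" for j
    proof -
      have "row (dmat m d) j = d j \<cdot>\<^sub>v unit_vec m j"
        using j unfolding dmat_def by (intro eq_vecI) (auto simp: unit_vec_def)
      thus ?thesis using a j by simp
    qed
    have "dmat m d *\<^sub>v a = vec m (\<lambda>j. d j * a $ j)"
      by (rule eq_vecI, insert row, auto simp: dmat_def[symmetric])
    thus ?thesis using a by (auto simp: scalar_prod_def lessThan_atLeast0)
  qed
  also have "\<dots> = (\<Sum>j<m. d j * complex_of_real ((cmod (a $ j))\<^sup>2))"
    by (rule sum.cong, simp, subst complex_norm_square, simp add: mult.assoc)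
  finally show ?thesis .
qed

lemma unit_inner_left: assumes "b \<in> carrier_vec n" "i < n"
  shows "unit_vec n i \<bullet>c b = cnj (b $ i)"
  using assms by simp

lemma conj_unit_vec[simp]: "conjugate (unit_vec n i :: complex vec) = unit_vec n i"
  by (rule eq_vecI, auto simp: unit_vec_def)

lemma unit_inner_right: assumes "b \<in> carrier_vec n" "i < n"
  shows "b \<bullet>c unit_vec n i = (b $ i :: complex)"
  using assms by simp

lemma nsq_one: "a \<bullet>c a = 1 \<Longrightarrow> nsq a = 1"
  by (simp add: cinner_self)

lemma nsq_unit: "i < n \<Longrightarrow> nsq (unit_vec n i) = 1"
  using nsq_one[of "unit_vec n i"] by simp

lemma colV_unit: assumes V: "V \<in> carrier_mat n n" and VV: "adj V * V = 1\<^sub>m n" and i: "i < n"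
  shows "adj V *\<^sub>v col V i = unit_vec n i"
proof -
  have "adj V *\<^sub>v col V i = col (adj V * V) i" using col_mult2[OF adj_carrier[OF V] V i] by simp
  thus ?thesis using VV i by simp
qed

lemma colV_norm: assumes V: "V \<in> carrier_mat n n" and VV: "adj V * V = 1\<^sub>m n" and i: "i < n"
  shows "nsq (col V i) = 1"
proof -
  have "col V i \<bullet>c col V i = (adj V *\<^sub>v col V i) $ i"
    using adj_vec_index[OF V col_carrier_vec[OF i V] i] by simp
  also have "\<dots> = 1" using colV_unit[OF V VV i] i by simp
  finally show ?thesis by (rule nsq_one)
qed

lemma unitary_inner: assumes V: "V \<in> carrier_mat n n" and VV: "adj V * V = 1\<^sub>m n"
  and x: "x \<in> carrier_vec n" and y: "y \<in> carrier_vec n"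
  shows "(adj V *\<^sub>v x) \<bullet>c (adj V *\<^sub>v y) = x \<bullet>c y"
proof -
  have VV': "V * adj V = 1\<^sub>m n" using mat_mult_left_right_inverse[OF adj_carrier[OF V] V VV] .
  have "(adj V *\<^sub>v x) \<bullet>c (adj V *\<^sub>v y) = x \<bullet>c (V *\<^sub>v (adj V *\<^sub>v y))"
    using inner_adj[OF adj_carrier[OF V] x mult_mat_vec_carrier[OF adj_carrier[OF V] y]] by simp
  also have "V *\<^sub>v (adj V *\<^sub>v y) = y"
    using assoc_mult_mat_vec[OF V adj_carrier[OF V] y] VV' y by simp
  finally show ?thesis .
qed

lemma cinner_smult_right: fixes x y :: "complex vec"
  assumes "x \<in> carrier_vec n" "y \<in> carrier_vec n"
  shows "x \<bullet>c (c \<cdot>\<^sub>v y) = cnj c * (x \<bullet>c y)"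
  using assms by (simp add: conjugate_smult_vec)

lemma cinner_smult_left: fixes x y :: "complex vec"
  assumes "x \<in> carrier_vec n" "y \<in> carrier_vec n"
  shows "(c \<cdot>\<^sub>v x) \<bullet>c y = c * (x \<bullet>c y)"
  using assms by simp


lemma core:
  fixes A V Y :: "complex mat" and u :: "complex vec" and lamf muf :: "nat \<Rightarrow> real"
    and I J :: "nat set" and k n m :: nat
  assumes A: "A \<in> carrier_mat n n"
    and V: "V \<in> carrier_mat n n" and VV: "adj V * V = 1\<^sub>m n"
    and AV: "A * V = V * dmat n (\<lambda>i. complex_of_real (lamf i))"
    and Y: "Y \<in> carrier_mat n m" and YY: "adj Y * Y = 1\<^sub>m m"
    and YAY: "adj Y * A * Y = dmat m (\<lambda>j. complex_of_real (muf j))"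
    and u: "u \<in> carrier_vec n" and Yu: "adj Y *\<^sub>v u = 0\<^sub>v m"
    and I: "I \<subseteq> {..<n}" and J: "J \<subseteq> {..<m}" and card: "card I + k \<le> card J"
  shows "\<exists>p q. (\<Sum>j<m. muf j * p j) = (\<Sum>i<n. lamf i * q i)
     \<and> (\<forall>j<m. 0 \<le> p j \<and> p j \<le> 1) \<and> (\<forall>j<m. j \<notin> J \<longrightarrow> p j = 0) \<and> (\<Sum>j<m. p j) = real k
     \<and> (\<forall>i<n. 0 \<le> q i) \<and> (\<forall>i\<in>I. q i = 0) \<and> (\<Sum>i<n. q i) = real k
     \<and> ((\<Sum>i\<in>{..<n}-I. (cmod ((adj V *\<^sub>v u) $ i))\<^sup>2) \<noteq> 0 \<longrightarrow>
          (\<forall>i<n. i \<notin> I \<longrightarrow> q i \<le> 1 - (cmod ((adj V *\<^sub>v u) $ i))\<^sup>2 / (\<Sum>i\<in>{..<n}-I. (cmod ((adj V *\<^sub>v u) $ i))\<^sup>2)))"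
proof -
  have adjV: "adj V \<in> carrier_mat n n" using V by simp
  have adjY: "adj Y \<in> carrier_mat m n" using Y by simp
  have VV': "V * adj V = 1\<^sub>m n" using mat_mult_left_right_inverse[OF adjV V VV] .
  define cs where "cs = map (unit_vec m) (sorted_list_of_set ({..<m} - J)) @ map (\<lambda>i. adj Y *\<^sub>v col V i) (sorted_list_of_set I)"
  have finI: "finite I" using I finite_subset by blast
  have finJ: "finite J" using J finite_subset by blast
  have csc: "set cs \<subseteq> carrier_vec m" unfolding cs_def using I finI adjY V by auto
  have "card J \<le> m" using card_mono[OF _ J] by simp
  hence lencs: "length cs + k \<le> m" unfolding cs_def using card finI finJ J
    by (simp add: card_Diff_subset)
  obtain as where as: "length as = k" "set as \<subseteq> carrier_vec m" "orthonormal as"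
    "\<forall>a\<in>set as. \<forall>c\<in>set cs. a \<bullet>c c = 0" using frames[OF csc lencs] by blast
  have asc: "as ! t \<in> carrier_vec m" if "t < k" for t using as that by auto
  have asn: "as ! t \<bullet>c as ! t = 1" if "t < k" for t using as(1,3) that unfolding orthonormal_def by auto
  have aJ: "as ! t $ j = 0" if t: "t < k" and j: "j < m" "j \<notin> J" for t j
  proof -
    have "unit_vec m j \<in> set cs" unfolding cs_def using finJ j by auto
    moreover have "as ! t \<in> set as" using as(1) t by simp
    ultimately have "as ! t \<bullet>c unit_vec m j = 0" using as(4) by blast
    thus ?thesis using unit_inner_right[OF asc[OF t] j(1)] by simp
  qed
  define x where "x t = Y *\<^sub>v (as ! t)" for t
  have xc: "x t \<in> carrier_vec n" if "t < k" for t unfolding x_def using Y asc[OF that] by simp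
  define bq where "bq t = adj V *\<^sub>v x t" for t
  have bqc: "bq t \<in> carrier_vec n" if "t < k" for t unfolding bq_def using adjV xc[OF that] by simp
  have bq_idx: "bq t $ i = x t \<bullet>c col V i" if "t < k" "i < n" for t i
    unfolding bq_def by (rule adj_vec_index[OF V xc[OF that(1)] that(2)])
  have aI: "bq t $ i = 0" if t: "t < k" and i: "i \<in> I" for t i
  proof -
    have iN: "i < n" using I i by auto
    have "adj Y *\<^sub>v col V i \<in> set cs" unfolding cs_def using finI i by auto
    moreover have "as ! t \<in> set as" using as(1) t by simp
    ultimately have "as ! t \<bullet>c (adj Y *\<^sub>v col V i) = 0" using as(4) by blast
    moreover have "x t \<bullet>c col V i = as ! t \<bullet>c (adj Y *\<^sub>v col V i)"
      unfolding x_def by (rule inner_adj[OF Y asc[OF t] col_carrier_vec[OF iN V]])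
    ultimately show ?thesis using bq_idx[OF t iN] by simp
  qed
  have xx: "x s \<bullet>c x t = as ! s \<bullet>c as ! t" if "s < k" "t < k" for s t
    unfolding x_def by (rule isometry_inner[OF Y YY asc[OF that(1)] asc[OF that(2)]])
  have nsq_bq: "nsq (bq t) = 1" if t: "t < k" for t
  proof -
    have "bq t \<bullet>c bq t = 1" unfolding bq_def
      using unitary_inner[OF V VV xc[OF t] xc[OF t]] xx[OF t t] asn[OF t] by simp
    thus ?thesis by (rule nsq_one)
  qed
  define p where "p j = (\<Sum>t<k. (cmod (as ! t $ j))\<^sup>2)" for j
  define q where "q i = (\<Sum>t<k. (cmod (bq t $ i))\<^sup>2)" for i
  have ray1: "(A *\<^sub>v x t) \<bullet>c x t = complex_of_real (\<Sum>j<m. muf j * (cmod (as ! t $ j))\<^sup>2)" if t: "t < k" for t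
  proof -
    have "(A *\<^sub>v x t) \<bullet>c x t = (adj Y *\<^sub>v (A *\<^sub>v x t)) \<bullet>c (as ! t)"
      unfolding x_def by (rule inner_adj2[OF Y _ asc[OF t]], insert A Y asc[OF t], auto)
    also have "adj Y *\<^sub>v (A *\<^sub>v x t) = (adj Y * A * Y) *\<^sub>v (as ! t)"
    proof -
      have c1: "adj Y * A \<in> carrier_mat m n" using adjY A by simp
      have "(adj Y * A * Y) *\<^sub>v (as ! t) = (adj Y * A) *\<^sub>v (Y *\<^sub>v as ! t)"
        by (rule assoc_mult_mat_vec[OF c1 Y asc[OF t]])
      also have "\<dots> = adj Y *\<^sub>v (A *\<^sub>v (Y *\<^sub>v as ! t))"
        by (rule assoc_mult_mat_vec[OF adjY A], insert Y asc[OF t], simp)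
      finally show ?thesis unfolding x_def by simp
    qed
    also have "\<dots> = dmat m (\<lambda>j. complex_of_real (muf j)) *\<^sub>v (as ! t)" using YAY by simp
    also have "(dmat m (\<lambda>j. complex_of_real (muf j)) *\<^sub>v (as ! t)) \<bullet>c (as ! t) =
       (\<Sum>j<m. complex_of_real (muf j) * complex_of_real ((cmod (as ! t $ j))\<^sup>2))"
      by (rule quad_dmat[OF asc[OF t]])
    finally show ?thesis by simp
  qed
  have ray2: "(A *\<^sub>v x t) \<bullet>c x t = complex_of_real (\<Sum>i<n. lamf i * (cmod (bq t $ i))\<^sup>2)" if t: "t < k" for t
  proof -
    have xV: "x t = V *\<^sub>v bq t" unfolding bq_def
      using assoc_mult_mat_vec[OF V adjV xc[OF t]] VV' xc[OF t] by simp
    have "A *\<^sub>v x t = V *\<^sub>v (dmat n (\<lambda>i. complex_of_real (lamf i)) *\<^sub>v bq t)"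
      unfolding xV using A V bqc[OF t]
      by (simp add: assoc_mult_mat_vec[symmetric, of _ n n _ n] AV)
    hence "(A *\<^sub>v x t) \<bullet>c x t = (dmat n (\<lambda>i. complex_of_real (lamf i)) *\<^sub>v bq t) \<bullet>c bq t"
      using xV isometry_inner[OF V VV mult_mat_vec_carrier[OF dmat_carrier bqc[OF t]] bqc[OF t]] by simp
    also have "\<dots> = (\<Sum>i<n. complex_of_real (lamf i) * complex_of_real ((cmod (bq t $ i))\<^sup>2))"
      by (rule quad_dmat[OF bqc[OF t]])
    finally show ?thesis by simp
  qed
  have eq: "(\<Sum>j<m. muf j * p j) = (\<Sum>i<n. lamf i * q i)"
  proof -
    have "(\<Sum>j<m. muf j * p j) = (\<Sum>t<k. \<Sum>j<m. muf j * (cmod (as ! t $ j))\<^sup>2)"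
      unfolding p_def by (simp add: sum_distrib_left sum.swap[of _ "{..<m}"])
    also have "\<dots> = (\<Sum>t<k. \<Sum>i<n. lamf i * (cmod (bq t $ i))\<^sup>2)"
      by (rule sum.cong, simp, insert ray1 ray2, auto simp del: of_real_sum)
    also have "\<dots> = (\<Sum>i<n. lamf i * q i)"
      unfolding q_def by (simp add: sum_distrib_left sum.swap[of _ "{..<n}"])
    finally show ?thesis .
  qed
  have p01: "0 \<le> p j \<and> p j \<le> 1" if j: "j < m" for j
  proof
    show "0 \<le> p j" unfolding p_def by (auto intro: sum_nonneg)
    have "(\<Sum>t<length as. (cmod (unit_vec m j \<bullet>c as ! t))\<^sup>2) \<le> nsq (unit_vec m j)"
      by (rule bessel[OF as(2,3)], insert j, simp)
    moreover have "(cmod (unit_vec m j \<bullet>c as ! t)) = cmod (as ! t $ j)" if "t < k" for t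
      using unit_inner_left[OF asc[OF that] j] by simp
    ultimately show "p j \<le> 1" unfolding p_def using nsq_unit[OF j] as(1) by simp
  qed
  have pJ: "p j = 0" if "j < m" "j \<notin> J" for j unfolding p_def using aJ that by simp
  have psum: "(\<Sum>j<m. p j) = real k"
  proof -
    have "(\<Sum>j<m. p j) = (\<Sum>t<k. \<Sum>j<m. (cmod (as ! t $ j))\<^sup>2)" unfolding p_def
      by (rule sum.swap)
    also have "\<dots> = (\<Sum>t<k. nsq (as ! t))"
    proof (rule sum.cong[OF refl])
      fix t assume "t \<in> {..<k}"
      hence "dim_vec (as ! t) = m" using asc by auto
      thus "(\<Sum>j<m. (cmod (as ! t $ j))\<^sup>2) = nsq (as ! t)" unfolding nsq_def by simp
    qed
    also have "\<dots> = (\<Sum>t<k. 1)" using asn nsq_one by simp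
    finally show ?thesis by simp
  qed
  have q0: "0 \<le> q i" for i unfolding q_def by (auto intro: sum_nonneg)
  have qI: "q i = 0" if "i \<in> I" for i unfolding q_def using aI that by simp
  have qsum: "(\<Sum>i<n. q i) = real k"
  proof -
    have "(\<Sum>i<n. q i) = (\<Sum>t<k. \<Sum>i<n. (cmod (bq t $ i))\<^sup>2)" unfolding q_def
      by (rule sum.swap)
    also have "\<dots> = (\<Sum>t<k. nsq (bq t))"
    proof (rule sum.cong[OF refl])
      fix t assume "t \<in> {..<k}"
      hence "dim_vec (bq t) = n" using bqc by auto
      thus "(\<Sum>i<n. (cmod (bq t $ i))\<^sup>2) = nsq (bq t)" unfolding nsq_def by simp
    qed
    also have "\<dots> = (\<Sum>t<k. 1)" using nsq_bq by auto
    finally show ?thesis by simp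
  qed
  define bu where "bu = adj V *\<^sub>v u"
  have buc: "bu \<in> carrier_vec n" unfolding bu_def using adjV u by simp
  define c where "c i = (cmod (bu $ i))\<^sup>2" for i
  define S where "S = (\<Sum>i\<in>{..<n}-I. c i)"
  have qbound: "q i \<le> 1 - c i / S" if S0: "S \<noteq> 0" and i: "i < n" "i \<notin> I" for i
  proof -
    have Spos: "S > 0" using S0 unfolding S_def c_def by (metis order_le_less sum_nonneg zero_le_power2)
    define b' where "b' = vec n (\<lambda>i. if i \<in> I then 0 else bu $ i)"
    have b'c: "b' \<in> carrier_vec n" unfolding b'_def by simp
    define w0 where "w0 = V *\<^sub>v b'"
    have w0c: "w0 \<in> carrier_vec n" unfolding w0_def using V b'c by simp
    define w where "w = complex_of_real (1 / sqrt S) \<cdot>\<^sub>v w0"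
    have wc: "w \<in> carrier_vec n" unfolding w_def using w0c by simp
    have nb': "nsq b' = S"
    proof -
      have "nsq b' = (\<Sum>i<n. if i \<in> I then 0 else c i)" unfolding nsq_def b'_def c_def
        by (auto intro!: sum.cong)
      also have "\<dots> = S" unfolding S_def
        by (simp add: sum.If_cases Diff_eq)
      finally show ?thesis .
    qed
    have w0w0: "w0 \<bullet>c w0 = complex_of_real S" unfolding w0_def
      using isometry_inner[OF V VV b'c b'c] nb' by (simp add: cinner_self)
    have ww: "w \<bullet>c w = 1"
    proof -
      have "w \<bullet>c w = complex_of_real (1 / sqrt S) * cnj (complex_of_real (1 / sqrt S)) * (w0 \<bullet>c w0)"
        unfolding w_def using w0c by (simp add: conjugate_smult_vec)
      also have "\<dots> = 1"
      proof -
        have "(1 / sqrt S)^2 * S = 1" using Spos by (simp add: power_divide)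
        hence "complex_of_real ((1 / sqrt S)^2 * S) = 1" by simp
        thus ?thesis by (simp add: w0w0 power2_eq_square flip: of_real_mult)
      qed
      finally show ?thesis .
    qed
    have xw0: "x t \<bullet>c w0 = 0" if t: "t < k" for t
    proof -
      have "x t \<bullet>c w0 = bq t \<bullet>c b'" unfolding w0_def bq_def
        by (rule inner_adj2[OF V xc[OF t] b'c])
      also have "\<dots> = bq t \<bullet>c bu"
        unfolding b'_def using bqc[OF t] buc aI[OF t]
        by (auto simp: scalar_prod_def intro!: sum.cong)
      also have "\<dots> = x t \<bullet>c u" unfolding bq_def bu_def
        by (rule unitary_inner[OF V VV xc[OF t] u])
      also have "\<dots> = as ! t \<bullet>c (adj Y *\<^sub>v u)" unfolding x_def
        by (rule inner_adj[OF Y asc[OF t] u])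
      also have "\<dots> = 0" using Yu asc[OF t] by simp
      finally show ?thesis .
    qed
    have xw: "x t \<bullet>c w = 0" if t: "t < k" for t
      unfolding w_def using cinner_smult_right[OF xc[OF t] w0c] xw0[OF t] by simp
    define xs where "xs = map x [0..<k]"
    have xsc: "set xs \<subseteq> carrier_vec n" unfolding xs_def using xc by auto
    have xson: "orthonormal xs" unfolding xs_def orthonormal_def
      using xx as(1,3) unfolding orthonormal_def by auto
    have wxs: "\<forall>b\<in>set xs. w \<bullet>c b = 0"
    proof
      fix b assume "b \<in> set xs"
      then obtain t where t: "t < k" "b = x t" unfolding xs_def by auto
      show "w \<bullet>c b = 0" using cinner_comm[OF wc xc[OF t(1)]] xw[OF t(1)] t(2) by simp
    qed
    have on: "orthonormal (xs @ [w])" by (rule orthonormal_snoc[OF xsc xson wc ww wxs])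
    have onc: "set (xs @ [w]) \<subseteq> carrier_vec n" using xsc wc by simp
    from bessel[OF onc on col_carrier_vec[OF i(1) V]]
    have bes: "(\<Sum>t<Suc k. (cmod (col V i \<bullet>c (xs @ [w]) ! t))\<^sup>2) \<le> 1"
      using colV_norm[OF V VV i(1)] by (simp add: xs_def)
    have t1: "(cmod (col V i \<bullet>c (xs @ [w]) ! t))\<^sup>2 = (cmod (bq t $ i))\<^sup>2" if t: "t < k" for t
    proof -
      have "(xs @ [w]) ! t = x t" using t by (simp add: xs_def nth_append)
      moreover have "col V i \<bullet>c x t = cnj (x t \<bullet>c col V i)"
        by (rule cinner_comm[OF col_carrier_vec[OF i(1) V] xc[OF t]])
      ultimately show ?thesis using bq_idx[OF t i(1)] by simp
    qed
    have t2: "(cmod (col V i \<bullet>c (xs @ [w]) ! k))\<^sup>2 = c i / S"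
    proof -
      have "(xs @ [w]) ! k = w" by (simp add: xs_def nth_append)
      moreover have "col V i \<bullet>c w0 = cnj (bu $ i)"
      proof -
        have "col V i \<bullet>c w0 = (adj V *\<^sub>v col V i) \<bullet>c b'" unfolding w0_def
          by (rule inner_adj2[OF V col_carrier_vec[OF i(1) V] b'c])
        also have "\<dots> = cnj (b' $ i)" using colV_unit[OF V VV i(1)] unit_inner_left[OF b'c i(1)] by simp
        finally show ?thesis using i unfolding b'_def by simp
      qed
      ultimately have "col V i \<bullet>c (xs @ [w]) ! k = cnj (complex_of_real (1 / sqrt S)) * cnj (bu $ i)"
        unfolding w_def using cinner_smult_right[OF col_carrier_vec[OF i(1) V] w0c] by simp
      hence "cmod (col V i \<bullet>c (xs @ [w]) ! k) = (1 / sqrt S) * cmod (bu $ i)"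
        using Spos by (simp add: norm_mult norm_divide)
      thus ?thesis unfolding c_def using Spos by (simp add: power_mult_distrib power_divide)
    qed
    have "(\<Sum>t<Suc k. (cmod (col V i \<bullet>c (xs @ [w]) ! t))\<^sup>2) = q i + c i / S"
      unfolding q_def using t1 t2 by simp
    thus ?thesis using bes by simp
  qed
  show ?thesis
    apply (rule exI[of _ p], rule exI[of _ q])
    using eq p01 pJ psum q0 qI qsum qbound unfolding S_def c_def bu_def by auto
qed

lemma sum_shift1: assumes "1 \<le> a"
  shows "(\<Sum>j\<in>{a..b}. g j) = (\<Sum>i\<in>{a-1..<b}. (g (Suc i) :: real))"
proof -
  have "{a..b} = Suc ` {a-1..<b}" using assms
    by (auto simp: image_iff)
  hence "(\<Sum>j\<in>{a..b}. g j) = sum g (Suc ` {a-1..<b})" by simp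
  also have "\<dots> = sum (g \<circ> Suc) {a-1..<b}" by (rule sum.reindex) simp
  finally show ?thesis by simp
qed

theorem theorem3p2:
  fixes n :: nat and A :: "complex mat" and lam :: "nat \<Rightarrow> real"
    and v :: "nat \<Rightarrow> complex vec" and u :: "complex vec"
    and U :: "complex mat" and mu :: "nat \<Rightarrow> real" and l r :: nat
  assumes n2: "n \<ge> 2"
    and A_carrier: "A \<in> carrier_mat n n" and A_herm: "hermitian_mat A"
    and lam_sorted: "\<And>i j. 1 \<le> i \<Longrightarrow> i \<le> j \<Longrightarrow> j \<le> n \<Longrightarrow> lam j \<le> lam i"
    and v_carrier: "\<And>i. 1 \<le> i \<Longrightarrow> i \<le> n \<Longrightarrow> v i \<in> carrier_vec n"
    and v_eig: "\<And>i. 1 \<le> i \<Longrightarrow> i \<le> n \<Longrightarrow> A *\<^sub>v v i = complex_of_real (lam i) \<cdot>\<^sub>v v i"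
    and v_orthonormal: "\<And>i j. 1 \<le> i \<Longrightarrow> i \<le> n \<Longrightarrow> 1 \<le> j \<Longrightarrow> j \<le> n \<Longrightarrow>
          v i \<bullet>c v j = (if i = j then 1 else 0)"
    and u_carrier: "u \<in> carrier_vec n" and u_unit: "u \<bullet>c u = 1"
    and U_carrier: "U \<in> carrier_mat n (n - 1)"
    and U_isometry: "adj U * U = 1\<^sub>m (n - 1)"
    and U_perp: "adj U *\<^sub>v u = 0\<^sub>v (n - 1)"
    and mu_sorted: "\<And>i j. 1 \<le> i \<Longrightarrow> i \<le> j \<Longrightarrow> j \<le> n - 1 \<Longrightarrow> mu j \<le> mu i"
    and mu_eig: "char_poly (adj U * A * U) = (\<Prod>j\<in>{1..n-1}. [:- complex_of_real (mu j), 1:])"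
    and lr: "1 \<le> l" "l \<le> r" "r \<le> n - 1"
    and U_nz: "(\<Sum>i\<in>{l..n}. (cmod (u \<bullet>c v i))\<^sup>2) \<noteq> 0"
    and L_nz: "(\<Sum>i\<in>{1..r+1}. (cmod (u \<bullet>c v i))\<^sup>2) \<noteq> 0"
  shows "(\<Sum>j\<in>{l..r}. lam (j+1))
           + (\<Sum>j\<in>{l..r}. (cmod (u \<bullet>c v (j+1)))\<^sup>2 / (\<Sum>i\<in>{1..r+1}. (cmod (u \<bullet>c v i))\<^sup>2)
                              * (lam l - lam (j+1)))
         \<le> (\<Sum>j\<in>{l..r}. mu j)
       \<and> (\<Sum>j\<in>{l..r}. mu j)
         \<le> (\<Sum>j\<in>{l..r}. lam j)
           - (\<Sum>j\<in>{l..r}. (cmod (u \<bullet>c v j))\<^sup>2 / (\<Sum>i\<in>{l..n}. (cmod (u \<bullet>c v i))\<^sup>2)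
                              * (lam j - lam (r+1)))"
proof -
  define m where "m = n - 1"
  have nm: "n = Suc m" using n2 unfolding m_def by simp
  define lamf where "lamf i = lam (Suc i)" for i
  define muf where "muf j = mu (Suc j)" for j
  define vs where "vs = map (\<lambda>i. v (Suc i)) [0..<n]"
  have vsc: "set vs \<subseteq> carrier_vec n" unfolding vs_def using v_carrier by auto
  have vson: "orthonormal vs" unfolding vs_def orthonormal_def using v_orthonormal by auto
  define V where "V = mat_of_cols n vs"
  have V: "V \<in> carrier_mat n n" unfolding V_def using mat_of_cols_carrier(1)[of n vs] by (simp add: vs_def)
  have VV: "adj V * V = 1\<^sub>m n" unfolding V_def using orthonormal_adj[OF vsc vson] by (simp add: vs_def)
  have colV: "col V i = v (Suc i)" if "i < n" for i
    unfolding V_def using col_mat_of_cols[of i vs n] that v_carrier[of "Suc i"] by (simp add: vs_def)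
  have AV: "A * V = V * dmat n (\<lambda>i. complex_of_real (lamf i))"
  proof (rule eq_matI)
    fix a j assume "a < dim_row (V * dmat n (\<lambda>i. complex_of_real (lamf i)))"
      "j < dim_col (V * dmat n (\<lambda>i. complex_of_real (lamf i)))"
    hence a: "a < n" and j: "j < n" using V by auto
    have vj: "v (Suc j) \<in> carrier_vec n" using v_carrier j by simp
    have "(A * V) $$ (a, j) = (A *\<^sub>v col V j) $ a" using A_carrier V a j by simp
    also have "\<dots> = complex_of_real (lamf j) * v (Suc j) $ a"
      using v_eig[of "Suc j"] j a vj unfolding colV[OF j] lamf_def by simp
    also have "col (dmat n (\<lambda>i. complex_of_real (lamf i))) j = complex_of_real (lamf j) \<cdot>\<^sub>v unit_vec n j"
      using j unfolding dmat_def by (intro eq_vecI) (auto simp: unit_vec_def)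
    hence "(V * dmat n (\<lambda>i. complex_of_real (lamf i))) $$ (a, j) = complex_of_real (lamf j) * V $$ (a, j)"
      using V a j by simp
    moreover have "V $$ (a, j) = v (Suc j) $ a" using colV[OF j] V a j
      by (metis col_def carrier_matD(1) index_vec)
    ultimately show "(A * V) $$ (a, j) = (V * dmat n (\<lambda>i. complex_of_real (lamf i))) $$ (a, j)"
      by (metis \<open>(A * V) $$ (a, j) = (A *\<^sub>v col V j) $ a\<close> \<open>(A *\<^sub>v col V j) $ a = complex_of_real (lamf j) * v (Suc j) $ a\<close>)
  qed (insert A_carrier V, auto)
  have Uc: "U \<in> carrier_mat n m" using U_carrier unfolding m_def .
  have adjU: "adj U \<in> carrier_mat m n" using Uc by simp
  have UU: "adj U * U = 1\<^sub>m m" using U_isometry unfolding m_def .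
  have Uu: "adj U *\<^sub>v u = 0\<^sub>v m" using U_perp unfolding m_def .
  have Aadj: "adj A = A" using A_herm unfolding hermitian_mat_def .
  define B where "B = adj U * A * U"
  have AU: "A * U \<in> carrier_mat n m" using A_carrier Uc by simp
  have UA: "adj U * A \<in> carrier_mat m n" using A_carrier adjU by simp
  have Bc: "B \<in> carrier_mat m m" unfolding B_def using UA Uc by simp
  have Bassoc: "B = adj U * (A * U)" unfolding B_def by (rule assoc_mult_mat[OF adjU A_carrier Uc])
  have Bh: "adj B = B"
  proof -
    have "adj B = adj (A * U) * adj (adj U)" unfolding Bassoc by (rule adj_mult[OF adjU AU])
    also have "adj (A * U) = adj U * adj A" by (rule adj_mult[OF A_carrier Uc])
    finally have "adj B = adj U * adj A * adj (adj U)" .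
    thus ?thesis using Aadj unfolding B_def by simp
  qed
  define es where "es = map (\<lambda>j. complex_of_real (mu j)) [1..<n]"
  have cpB: "char_poly B = (\<Prod>e \<leftarrow> es. [:- e, 1:])"
  proof -
    have st: "{1..n-1} = set [1..<n]" using n2 by auto
    have "(\<Prod>j\<in>set [1..<n]. [:- complex_of_real (mu j), 1:]) = (\<Prod>j \<leftarrow> [1..<n]. [:- complex_of_real (mu j), 1:])"
      by (rule prod.distinct_set_conv_list) simp
    hence "(\<Prod>j\<in>{1..n-1}. [:- complex_of_real (mu j), 1:]) = (\<Prod>j \<leftarrow> [1..<n]. [:- complex_of_real (mu j), 1:])"
      unfolding st .
    thus ?thesis using mu_eig unfolding B_def es_def by (simp add: comp_def)
  qed
  obtain W where W: "W \<in> carrier_mat m m" "adj W * W = 1\<^sub>m m" "B * W = W * dmat m (\<lambda>i. es ! i)"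
    using spectral[OF Bc Bh cpB] by blast
  have adjW: "adj W \<in> carrier_mat m m" using W(1) by simp
  have dm: "dmat m (\<lambda>i. es ! i) = dmat m (\<lambda>j. complex_of_real (muf j))"
  proof -
    have esj: "es ! j = complex_of_real (muf j)" if "j < m" for j
      unfolding es_def muf_def using nm that by (simp del: upt_Suc)
    show ?thesis unfolding dmat_def using esj by (intro eq_matI) auto
  qed
  define Y where "Y = U * W"
  have Y: "Y \<in> carrier_mat n m" unfolding Y_def using Uc W(1) by simp
  have UW: "U * W \<in> carrier_mat n m" using Uc W(1) by simp
  have adjY_eq: "adj Y = adj W * adj U" unfolding Y_def by (rule adj_mult[OF Uc W(1)])
  have YY: "adj Y * Y = 1\<^sub>m m"
  proof -
    have "adj Y * Y = adj W * (adj U * (U * W))" unfolding adjY_eq unfolding Y_def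
      by (rule assoc_mult_mat[OF adjW adjU UW])
    also have "adj U * (U * W) = (adj U * U) * W" by (rule assoc_mult_mat[OF adjU Uc W(1), symmetric])
    finally show ?thesis using UU W(1,2) by simp
  qed
  have YAY: "adj Y * A * Y = dmat m (\<lambda>j. complex_of_real (muf j))"
  proof -
    have "adj Y * A = adj W * (adj U * A)" unfolding adjY_eq by (rule assoc_mult_mat[OF adjW adjU A_carrier])
    hence "adj Y * A * Y = (adj W * (adj U * A)) * (U * W)" unfolding Y_def by simp
    also have "\<dots> = adj W * ((adj U * A) * (U * W))" by (rule assoc_mult_mat[OF adjW UA UW])
    also have "(adj U * A) * (U * W) = B * W" unfolding B_def by (rule assoc_mult_mat[OF UA Uc W(1), symmetric])
    also have "adj W * (B * W) = (adj W * W) * dmat m (\<lambda>i. es ! i)"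
      unfolding W(3) by (rule assoc_mult_mat[OF adjW W(1) dmat_carrier, symmetric])
    finally show ?thesis using W(2) dm by simp
  qed
  have W0: "adj W *\<^sub>v 0\<^sub>v m = 0\<^sub>v m" using W(1) by (intro eq_vecI) (auto simp: scalar_prod_def)
  have Yu: "adj Y *\<^sub>v u = 0\<^sub>v m"
    unfolding adjY_eq using assoc_mult_mat_vec[OF adjW adjU u_carrier] Uu W0 by simp
  have bu: "(adj V *\<^sub>v u) $ i = u \<bullet>c v (Suc i)" if "i < n" for i
    using adj_vec_index[OF V u_carrier that] colV[OF that] by simp
  define c where "c i = (cmod ((adj V *\<^sub>v u) $ i))\<^sup>2" for i
  have c_eq: "c i = (cmod (u \<bullet>c v (Suc i)))\<^sup>2" if "i < n" for i unfolding c_def using bu[OF that] by simp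
  define k where "k = Suc r - l"
  have rn: "r < n" "r \<le> m" using lr nm by auto
  have lamf_mono: "lamf j \<le> lamf i" if "i \<le> j" "j < n" for i j
    unfolding lamf_def using lam_sorted[of "Suc i" "Suc j"] that by simp
  have muf_mono: "muf j \<le> muf i" if "i \<le> j" "j < m" for i j
    unfolding muf_def using mu_sorted[of "Suc i" "Suc j"] that nm by simp
  note core_inst = core[OF A_carrier V VV AV Y YY YAY u_carrier Yu, folded c_def]
  have upper: "(\<Sum>j\<in>{l..r}. mu j) \<le> (\<Sum>j\<in>{l..r}. lam j)
           - (\<Sum>j\<in>{l..r}. (cmod (u \<bullet>c v j))\<^sup>2 / (\<Sum>i\<in>{l..n}. (cmod (u \<bullet>c v i))\<^sup>2) * (lam j - lam (r+1)))"
  proof -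
    define I1 where "I1 = {..<l-1}"
    define J1 where "J1 = {..<r}"
    define T where "T = {l-1..<r}"
    have cardT: "card T = k" unfolding T_def k_def using lr by simp
    have cc: "card I1 + k \<le> card J1" unfolding I1_def J1_def k_def using lr by simp
    have I1s: "I1 \<subseteq> {..<n}" unfolding I1_def using rn lr by auto
    have J1s: "J1 \<subseteq> {..<m}" unfolding J1_def using rn by auto
    from core_inst[OF I1s J1s cc] obtain p q where pq:
      "(\<Sum>j<m. muf j * p j) = (\<Sum>i<n. lamf i * q i)"
      "\<forall>j<m. 0 \<le> p j \<and> p j \<le> 1" "\<forall>j<m. j \<notin> J1 \<longrightarrow> p j = 0" "(\<Sum>j<m. p j) = real k"
      "\<forall>i<n. 0 \<le> q i" "\<forall>i\<in>I1. q i = 0" "(\<Sum>i<n. q i) = real k"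
      "(\<Sum>i\<in>{..<n}-I1. c i) \<noteq> 0 \<longrightarrow> (\<forall>i<n. i \<notin> I1 \<longrightarrow> q i \<le> 1 - c i / (\<Sum>i\<in>{..<n}-I1. c i))"
      by blast
    define S where "S = (\<Sum>i\<in>{..<n}-I1. c i)"
    have S_eq: "S = (\<Sum>i\<in>{l..n}. (cmod (u \<bullet>c v i))\<^sup>2)"
    proof -
      have "{..<n} - I1 = {l-1..<n}" unfolding I1_def by auto
      hence "S = (\<Sum>i\<in>{l-1..<n}. c i)" unfolding S_def by simp
      also have "\<dots> = (\<Sum>i\<in>{l-1..<n}. (cmod (u \<bullet>c v (Suc i)))\<^sup>2)" by (rule sum.cong, simp, rule c_eq, simp)
      also have "\<dots> = (\<Sum>i\<in>{l..n}. (cmod (u \<bullet>c v i))\<^sup>2)" by (rule sum_shift1[symmetric], rule lr)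
      finally show ?thesis .
    qed
    have S0: "S \<noteq> 0" using U_nz S_eq by simp
    have qh: "q i \<le> 1 - c i / S" if "i < n" "i \<notin> I1" for i using pq(8) S0 that unfolding S_def by auto
    have mu_side: "(\<Sum>j\<in>T. muf j) \<le> (\<Sum>j<m. muf j * p j)"
    proof -
      have "(\<Sum>j<m. muf j * p j) = (\<Sum>j\<in>J1. muf j * p j)"
        by (rule sum.mono_neutral_right, insert pq(3) rn, auto simp: J1_def)
      moreover have "(\<Sum>j<m. p j) = (\<Sum>j\<in>J1. p j)"
        by (rule sum.mono_neutral_right, insert pq(3) rn, auto simp: J1_def)
      ultimately have eq1: "(\<Sum>j<m. muf j * p j) = (\<Sum>j\<in>J1. muf j * p j)" and ps: "(\<Sum>j\<in>J1. p j) = real (card T)"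
        using pq(4) cardT by auto
      have "(\<Sum>j\<in>J1. (- muf j) * p j) \<le> (- muf (l-1)) * real (card T) + (\<Sum>j\<in>T. ((- muf j) - (- muf (l-1))) * 1)"
      proof (rule knap)
        show "finite J1" unfolding J1_def by simp
        show "T \<subseteq> J1" unfolding T_def J1_def by auto
        show "0 \<le> p i" if "i \<in> J1" for i using pq(2) that rn unfolding J1_def by auto
        show "p i \<le> 1" if "i \<in> T" for i using pq(2) that rn unfolding T_def by auto
        show "(\<Sum>i\<in>J1. p i) = real (card T)" by (rule ps)
        show "- muf (l-1) \<le> - muf i" if "i \<in> T" for i using muf_mono[of "l-1" i] that rn unfolding T_def by auto
        show "- muf i \<le> - muf (l-1)" if "i \<in> J1 - T" for i using muf_mono[of i "l-1"] that rn lr unfolding T_def J1_def by auto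
      qed
      moreover have "(\<Sum>j\<in>T. ((- muf j) - (- muf (l-1))) * 1) = real (card T) * muf (l-1) - (\<Sum>j\<in>T. muf j)"
        by (simp add: sum_subtractf)
      moreover have "(\<Sum>j\<in>J1. (- muf j) * p j) = - (\<Sum>j\<in>J1. muf j * p j)"
        by (simp add: sum_negf)
      ultimately show ?thesis using eq1 by simp
    qed
    have lam_side: "(\<Sum>i<n. lamf i * q i) \<le> lamf r * real (card T) + (\<Sum>i\<in>T. (lamf i - lamf r) * (1 - c i / S))"
    proof -
      define D where "D = {l-1..<n}"
      have "(\<Sum>i<n. lamf i * q i) = (\<Sum>i\<in>D. lamf i * q i)"
        by (rule sum.mono_neutral_right, insert pq(6), auto simp: D_def I1_def)
      moreover have "(\<Sum>i<n. q i) = (\<Sum>i\<in>D. q i)"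
        by (rule sum.mono_neutral_right, insert pq(6), auto simp: D_def I1_def)
      ultimately have eq1: "(\<Sum>i<n. lamf i * q i) = (\<Sum>i\<in>D. lamf i * q i)" and qs: "(\<Sum>i\<in>D. q i) = real (card T)"
        using pq(7) cardT by auto
      have "(\<Sum>i\<in>D. lamf i * q i) \<le> lamf r * real (card T) + (\<Sum>i\<in>T. (lamf i - lamf r) * (1 - c i / S))"
      proof (rule knap)
        show "finite D" unfolding D_def by simp
        show "T \<subseteq> D" unfolding T_def D_def using rn by auto
        show "0 \<le> q i" if "i \<in> D" for i using pq(5) that unfolding D_def by auto
        show "q i \<le> 1 - c i / S" if "i \<in> T" for i using qh[of i] that rn unfolding T_def I1_def by auto
        show "(\<Sum>i\<in>D. q i) = real (card T)" by (rule qs)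
        show "lamf r \<le> lamf i" if "i \<in> T" for i using lamf_mono[of i r] that rn unfolding T_def by auto
        show "lamf i \<le> lamf r" if "i \<in> D - T" for i using lamf_mono[of r i] that unfolding T_def D_def by auto
      qed
      thus ?thesis using eq1 by simp
    qed
    have rhs: "lamf r * real (card T) + (\<Sum>i\<in>T. (lamf i - lamf r) * (1 - c i / S))
        = (\<Sum>i\<in>T. lamf i) - (\<Sum>i\<in>T. c i / S * (lamf i - lamf r))"
      by (simp add: algebra_simps sum_subtractf sum.distrib)
    have e1: "(\<Sum>j\<in>{l..r}. mu j) = (\<Sum>i\<in>T. muf i)" unfolding T_def muf_def by (rule sum_shift1, rule lr)
    have e2: "(\<Sum>j\<in>{l..r}. lam j) = (\<Sum>i\<in>T. lamf i)" unfolding T_def lamf_def by (rule sum_shift1, rule lr)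
    have e3: "(\<Sum>j\<in>{l..r}. (cmod (u \<bullet>c v j))\<^sup>2 / (\<Sum>i\<in>{l..n}. (cmod (u \<bullet>c v i))\<^sup>2) * (lam j - lam (r+1)))
        = (\<Sum>i\<in>T. c i / S * (lamf i - lamf r))"
    proof -
      have "(\<Sum>j\<in>{l..r}. (cmod (u \<bullet>c v j))\<^sup>2 / S * (lam j - lam (r+1)))
          = (\<Sum>i\<in>T. (cmod (u \<bullet>c v (Suc i)))\<^sup>2 / S * (lam (Suc i) - lam (r+1)))"
        unfolding T_def by (rule sum_shift1, rule lr)
      also have "\<dots> = (\<Sum>i\<in>T. c i / S * (lamf i - lamf r))"
        by (rule sum.cong, simp, insert c_eq rn, auto simp: T_def lamf_def)
      finally show ?thesis using S_eq by simp
    qed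
    show ?thesis unfolding e1 e2 e3 using mu_side lam_side rhs pq(1) by linarith
  qed
  have lower: "(\<Sum>j\<in>{l..r}. lam (j+1))
           + (\<Sum>j\<in>{l..r}. (cmod (u \<bullet>c v (j+1)))\<^sup>2 / (\<Sum>i\<in>{1..r+1}. (cmod (u \<bullet>c v i))\<^sup>2)
                              * (lam l - lam (j+1))) \<le> (\<Sum>j\<in>{l..r}. mu j)"
  proof -
    define I2 where "I2 = {Suc r..<n}"
    define J2 where "J2 = {l-1..<m}"
    define T where "T = {l-1..<r}"
    define T2 where "T2 = {l..r}"
    have cardT: "card T = k" unfolding T_def k_def using lr by simp
    have cardT2: "card T2 = k" unfolding T2_def k_def using lr by simp
    have cc: "card I2 + k \<le> card J2" unfolding I2_def J2_def k_def using lr rn nm by simp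
    have I2s: "I2 \<subseteq> {..<n}" unfolding I2_def by auto
    have J2s: "J2 \<subseteq> {..<m}" unfolding J2_def by auto
    from core_inst[OF I2s J2s cc] obtain p q where pq:
      "(\<Sum>j<m. muf j * p j) = (\<Sum>i<n. lamf i * q i)"
      "\<forall>j<m. 0 \<le> p j \<and> p j \<le> 1" "\<forall>j<m. j \<notin> J2 \<longrightarrow> p j = 0" "(\<Sum>j<m. p j) = real k"
      "\<forall>i<n. 0 \<le> q i" "\<forall>i\<in>I2. q i = 0" "(\<Sum>i<n. q i) = real k"
      "(\<Sum>i\<in>{..<n}-I2. c i) \<noteq> 0 \<longrightarrow> (\<forall>i<n. i \<notin> I2 \<longrightarrow> q i \<le> 1 - c i / (\<Sum>i\<in>{..<n}-I2. c i))"
      by blast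
    define S where "S = (\<Sum>i\<in>{..<n}-I2. c i)"
    have S_eq: "S = (\<Sum>i\<in>{1..r+1}. (cmod (u \<bullet>c v i))\<^sup>2)"
    proof -
      have "{..<n} - I2 = {1-1..<r+1}" unfolding I2_def using rn by auto
      hence "S = (\<Sum>i\<in>{1-1..<r+1}. c i)" unfolding S_def by simp
      also have "\<dots> = (\<Sum>i\<in>{1-1..<r+1}. (cmod (u \<bullet>c v (Suc i)))\<^sup>2)" by (rule sum.cong, simp, rule c_eq, insert rn, simp)
      also have "\<dots> = (\<Sum>i\<in>{1..r+1}. (cmod (u \<bullet>c v i))\<^sup>2)" by (rule sum_shift1[symmetric], simp)
      finally show ?thesis .
    qed
    have S0: "S \<noteq> 0" using L_nz S_eq by simp
    have qh: "q i \<le> 1 - c i / S" if "i < n" "i \<notin> I2" for i using pq(8) S0 that unfolding S_def by auto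
    have mu_side: "(\<Sum>j<m. muf j * p j) \<le> (\<Sum>j\<in>T. muf j)"
    proof -
      have "(\<Sum>j<m. muf j * p j) = (\<Sum>j\<in>J2. muf j * p j)"
        by (rule sum.mono_neutral_right, insert pq(3), auto simp: J2_def)
      moreover have "(\<Sum>j<m. p j) = (\<Sum>j\<in>J2. p j)"
        by (rule sum.mono_neutral_right, insert pq(3), auto simp: J2_def)
      ultimately have eq1: "(\<Sum>j<m. muf j * p j) = (\<Sum>j\<in>J2. muf j * p j)" and ps: "(\<Sum>j\<in>J2. p j) = real (card T)"
        using pq(4) cardT by auto
      have "(\<Sum>j\<in>J2. muf j * p j) \<le> muf (r-1) * real (card T) + (\<Sum>j\<in>T. (muf j - muf (r-1)) * 1)"
      proof (rule knap)
        show "finite J2" unfolding J2_def by simp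
        show "T \<subseteq> J2" unfolding T_def J2_def using rn by auto
        show "0 \<le> p i" if "i \<in> J2" for i using pq(2) that unfolding J2_def by auto
        show "p i \<le> 1" if "i \<in> T" for i using pq(2) that rn unfolding T_def by auto
        show "(\<Sum>i\<in>J2. p i) = real (card T)" by (rule ps)
        show "muf (r-1) \<le> muf i" if "i \<in> T" for i using muf_mono[of i "r-1"] that rn unfolding T_def by auto
        show "muf i \<le> muf (r-1)" if "i \<in> J2 - T" for i using muf_mono[of "r-1" i] that rn lr unfolding T_def J2_def by auto
      qed
      moreover have "(\<Sum>j\<in>T. (muf j - muf (r-1)) * 1) = (\<Sum>j\<in>T. muf j) - real (card T) * muf (r-1)"
        by (simp add: sum_subtractf)
      ultimately show ?thesis using eq1 by simp
    qed
    have lam_side: "- lamf (l-1) * real (card T2) + (\<Sum>i\<in>T2. ((- lamf i) - (- lamf (l-1))) * (1 - c i / S))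
                    \<ge> - (\<Sum>i<n. lamf i * q i)"
    proof -
      define D where "D = {..<Suc r}"
      have "(\<Sum>i<n. lamf i * q i) = (\<Sum>i\<in>D. lamf i * q i)"
        by (rule sum.mono_neutral_right, insert pq(6) rn, auto simp: D_def I2_def)
      moreover have "(\<Sum>i<n. q i) = (\<Sum>i\<in>D. q i)"
        by (rule sum.mono_neutral_right, insert pq(6) rn, auto simp: D_def I2_def)
      ultimately have eq1: "(\<Sum>i<n. lamf i * q i) = (\<Sum>i\<in>D. lamf i * q i)" and qs: "(\<Sum>i\<in>D. q i) = real (card T2)"
        using pq(7) cardT2 by auto
      have "(\<Sum>i\<in>D. (- lamf i) * q i) \<le> - lamf (l-1) * real (card T2) + (\<Sum>i\<in>T2. ((- lamf i) - (- lamf (l-1))) * (1 - c i / S))"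
      proof (rule knap)
        show "finite D" unfolding D_def by simp
        show "T2 \<subseteq> D" unfolding T2_def D_def by auto
        show "0 \<le> q i" if "i \<in> D" for i using pq(5) that rn unfolding D_def by auto
        show "q i \<le> 1 - c i / S" if "i \<in> T2" for i using qh[of i] that rn unfolding T2_def I2_def by auto
        show "(\<Sum>i\<in>D. q i) = real (card T2)" by (rule qs)
        show "- lamf (l-1) \<le> - lamf i" if "i \<in> T2" for i using lamf_mono[of "l-1" i] that rn unfolding T2_def by auto
        show "- lamf i \<le> - lamf (l-1)" if "i \<in> D - T2" for i using lamf_mono[of i "l-1"] that rn lr unfolding T2_def D_def by auto
      qed
      moreover have "(\<Sum>i\<in>D. (- lamf i) * q i) = - (\<Sum>i\<in>D. lamf i * q i)" by (simp add: sum_negf)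
      ultimately show ?thesis using eq1 by simp
    qed
    have rhs: "- lamf (l-1) * real (card T2) + (\<Sum>i\<in>T2. ((- lamf i) - (- lamf (l-1))) * (1 - c i / S))
        = - ((\<Sum>i\<in>T2. lamf i) + (\<Sum>i\<in>T2. c i / S * (lamf (l-1) - lamf i)))"
      by (simp add: algebra_simps sum_subtractf sum.distrib)
    have e1: "(\<Sum>j\<in>{l..r}. mu j) = (\<Sum>i\<in>T. muf i)" unfolding T_def muf_def by (rule sum_shift1, rule lr)
    have e2: "(\<Sum>j\<in>{l..r}. lam (j+1)) = (\<Sum>i\<in>T2. lamf i)" unfolding T2_def lamf_def by simp
    have e3: "(\<Sum>j\<in>{l..r}. (cmod (u \<bullet>c v (j+1)))\<^sup>2 / (\<Sum>i\<in>{1..r+1}. (cmod (u \<bullet>c v i))\<^sup>2) * (lam l - lam (j+1)))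
        = (\<Sum>i\<in>T2. c i / S * (lamf (l-1) - lamf i))"
      unfolding S_eq[symmetric] T2_def
      by (rule sum.cong, simp, insert c_eq rn lr, auto simp: lamf_def)
    show ?thesis unfolding e1 e2 e3 using mu_side lam_side rhs pq(1) by linarith
  qed
  show ?thesis using lower upper by blast
qed

end
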